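(* Let $G$ be a simple connected graph with at least two vertices, and let $f$ be a harmonic eigenfunction for $\lambda_1$ of $G$. Let $u,v$ be vertices with $f(u)\le f(z)\le f(v)$ for all $z\in V(G)$. Define \[ \mathrm{vol}_P=\sum_{z:\,f(z)\ge 0} d(z),\qquad \mathrm{vol}_N=\sum_{z:\,f(z)<0} d(z). \] Then \[ \lambda_1(G)\ge \frac{2}{\mathrm{dist}(u,v)\sqrt{\mathrm{vol}_P\cdot\mathrm{vol}_N}}. \]
   Context: For a connected simple graph $G$ with degree function $d$, the normalized Laplacian spectral gap is \[ \lambda_1=\inf_{f\neq 0,\ \sum_u f(u)d(u)=0}\frac{\sum_{u\sim v}(f(u)-f(v))^2}{\sum_v f(v)^2 d(v)}, \] where the numerator sums over edges. A harmonic eigenfunction for $\lambda_1$ is a nonzero function $f:V(G)\to\mathbb{R}$ with $\sum_u f(u)d(u)=0$ that attains this infimum. Here $\mathrm{dist}(u,v)$ is the graph distance. *)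

theory Defs
  imports "HOL-Analysis.Analysis"
begin

definition simple_graph :: "'a set \<Rightarrow> ('a \<Rightarrow> 'a \<Rightarrow> bool) \<Rightarrow> bool" where
  "simple_graph V E \<longleftrightarrow> finite V \<and> (\<forall>u v. E u v \<longrightarrow> u \<in> V \<and> v \<in> V)
     \<and> (\<forall>u v. E u v \<longrightarrow> E v u) \<and> (\<forall>u. \<not> E u u)"

definition degree :: "'a set \<Rightarrow> ('a \<Rightarrow> 'a \<Rightarrow> bool) \<Rightarrow> 'a \<Rightarrow> nat" where
  "degree V E u = card {v \<in> V. E u v}"

definition is_walk :: "'a set \<Rightarrow> ('a \<Rightarrow> 'a \<Rightarrow> bool) \<Rightarrow> 'a list \<Rightarrow> 'a \<Rightarrow> 'a \<Rightarrow> bool" where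
  "is_walk V E p u v \<longleftrightarrow> p \<noteq> [] \<and> hd p = u \<and> last p = v \<and> set p \<subseteq> V
     \<and> (\<forall>i. Suc i < length p \<longrightarrow> E (p ! i) (p ! Suc i))"

definition graph_connected :: "'a set \<Rightarrow> ('a \<Rightarrow> 'a \<Rightarrow> bool) \<Rightarrow> bool" where
  "graph_connected V E \<longleftrightarrow> (\<forall>u\<in>V. \<forall>v\<in>V. \<exists>p. is_walk V E p u v)"

definition graph_dist :: "'a set \<Rightarrow> ('a \<Rightarrow> 'a \<Rightarrow> bool) \<Rightarrow> 'a \<Rightarrow> 'a \<Rightarrow> nat" where
  "graph_dist V E u v = (LEAST n. \<exists>p. is_walk V E p u v \<and> length p = Suc n)"

text \<open>Sum over edges: each unordered edge {u,v} counted once, i.e. half of the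
sum over ordered adjacent pairs.\<close>

definition rayleigh :: "'a set \<Rightarrow> ('a \<Rightarrow> 'a \<Rightarrow> bool) \<Rightarrow> ('a \<Rightarrow> real) \<Rightarrow> real" where
  "rayleigh V E f =
     ((\<Sum>u\<in>V. \<Sum>v\<in>{w \<in> V. E u w}. (f u - f v)\<^sup>2) / 2)
     / (\<Sum>v\<in>V. (f v)\<^sup>2 * real (degree V E v))"

definition admissible :: "'a set \<Rightarrow> ('a \<Rightarrow> 'a \<Rightarrow> bool) \<Rightarrow> ('a \<Rightarrow> real) \<Rightarrow> bool" where
  "admissible V E f \<longleftrightarrow> (\<exists>u\<in>V. f u \<noteq> 0) \<and> (\<Sum>u\<in>V. f u * real (degree V E u)) = 0"

definition lambda1 :: "'a set \<Rightarrow> ('a \<Rightarrow> 'a \<Rightarrow> bool) \<Rightarrow> real" where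
  "lambda1 V E = Inf {rayleigh V E f | f. admissible V E f}"

definition harmonic_eigenfunction :: "'a set \<Rightarrow> ('a \<Rightarrow> 'a \<Rightarrow> bool) \<Rightarrow> ('a \<Rightarrow> real) \<Rightarrow> bool" where
  "harmonic_eigenfunction V E f \<longleftrightarrow> admissible V E f \<and> rayleigh V E f = lambda1 V E"

definition vol_P :: "'a set \<Rightarrow> ('a \<Rightarrow> 'a \<Rightarrow> bool) \<Rightarrow> ('a \<Rightarrow> real) \<Rightarrow> real" where
  "vol_P V E f = (\<Sum>z\<in>{z \<in> V. f z \<ge> 0}. real (degree V E z))"

definition vol_N :: "'a set \<Rightarrow> ('a \<Rightarrow> 'a \<Rightarrow> bool) \<Rightarrow> ('a \<Rightarrow> real) \<Rightarrow> real" where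
  "vol_N V E f = (\<Sum>z\<in>{z \<in> V. f z < 0}. real (degree V E z))"

end

theory Submission imports Defs begin
lemma cs_sum:
  fixes a :: "nat \<Rightarrow> real"
  shows "(\<Sum>i<D. a i)\<^sup>2 \<le> real D * (\<Sum>i<D. (a i)\<^sup>2)"
proof (cases "D = 0")
  case True then show ?thesis by simp
next
  case False
  define s where "s = (\<Sum>i<D. a i)"
  define c where "c = s / real D"
  have "0 \<le> (\<Sum>i<D. (a i - c)\<^sup>2)" by (intro sum_nonneg) auto
  also have "\<dots> = (\<Sum>i<D. (a i)\<^sup>2 - 2 * c * a i + c\<^sup>2)"
    by (simp add: power2_diff algebra_simps)
  also have "\<dots> = (\<Sum>i<D. (a i)\<^sup>2) - 2 * c * s + real D * c\<^sup>2"
    by (simp add: sum.distrib sum_subtractf sum_distrib_left[symmetric] s_def)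
  also have "\<dots> = (\<Sum>i<D. (a i)\<^sup>2) - 2 * (s / real D) * s + real D * (s/real D)\<^sup>2"
    by (simp add: c_def)
  also have "\<dots> = (\<Sum>i<D. (a i)\<^sup>2) - s\<^sup>2 / real D"
    using False by (simp add: power2_eq_square field_simps)
  finally have "s\<^sup>2 / real D \<le> (\<Sum>i<D. (a i)\<^sup>2)" by simp
  then show ?thesis using False by (simp add: s_def field_simps)
qed

lemma walk_shortcut:
  assumes w: "is_walk V E p x y" and ij: "i < j" "j < length p" and eq: "p ! i = p ! j"
  shows "is_walk V E (take i p @ drop j p) x y"
proof -
  let ?q = "take i p @ drop j p"
  have ne: "p \<noteq> []" and hd: "hd p = x" and la: "last p = y" and st: "set p \<subseteq> V"
    and ed: "\<And>k. Suc k < length p \<Longrightarrow> E (p ! k) (p ! Suc k)" using w unfolding is_walk_def by auto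
  have lq: "length ?q = i + (length p - j)" using ij by simp
  have nth: "\<And>k. k < length ?q \<Longrightarrow> ?q ! k = (if k < i then p ! k else p ! (j + k - i))"
    using ij by (auto simp: nth_append)
  have "?q \<noteq> []" using ij by simp
  moreover have "hd ?q = x"
  proof -
    have "hd ?q = ?q ! 0" using \<open>?q \<noteq> []\<close> by (simp add: hd_conv_nth)
    also have "\<dots> = p ! 0" using nth[of 0] ij eq by (cases "i = 0") auto
    finally show ?thesis using hd ne by (simp add: hd_conv_nth)
  qed
  moreover have "last ?q = y" using ij la by simp
  moreover have "set ?q \<subseteq> V" using st set_drop_subset[of j p] set_take_subset[of i p] by auto
  moreover have "\<forall>k. Suc k < length ?q \<longrightarrow> E (?q ! k) (?q ! Suc k)"
  proof (intro allI impI)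
    fix k assume k: "Suc k < length ?q"
    consider "Suc k < i" | "Suc k = i" | "i \<le> k" by linarith
    then show "E (?q ! k) (?q ! Suc k)"
    proof cases
      case 1 then show ?thesis using nth[of k] nth[of "Suc k"] k ed[of k] ij by auto
    next
      case 2 then show ?thesis using nth[of k] nth[of "Suc k"] k ed[of k] ij eq by auto
    next
      case 3
      have "?q ! k = p ! (j + k - i)" "?q ! Suc k = p ! Suc (j + k - i)"
        using nth[of k] nth[of "Suc k"] k 3 ij by (auto simp: Suc_diff_le)
      moreover have "Suc (j + k - i) < length p" using k lq 3 by simp
      ultimately show ?thesis using ed by simp
    qed
  qed
  ultimately show ?thesis unfolding is_walk_def by blast
qed

lemma shortest_walk:
  assumes c: "graph_connected V E" and x: "x \<in> V" and y: "y \<in> V"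
  shows "\<exists>p. is_walk V E p x y \<and> length p = Suc (graph_dist V E x y) \<and> distinct p"
proof -
  let ?P = "\<lambda>n. \<exists>p. is_walk V E p x y \<and> length p = Suc n"
  obtain p0 where p0: "is_walk V E p0 x y" using c x y unfolding graph_connected_def by blast
  have "p0 \<noteq> []" using p0 by (simp add: is_walk_def)
  then have "length p0 = Suc (length p0 - 1)" by simp
  then have "?P (length p0 - 1)" using p0 by blast
  then have "?P (graph_dist V E x y)" unfolding graph_dist_def by (rule LeastI)
  then obtain p where p: "is_walk V E p x y" "length p = Suc (graph_dist V E x y)" by blast
  have min: "\<And>q. is_walk V E q x y \<Longrightarrow> length p \<le> length q"
  proof -
    fix q assume q: "is_walk V E q x y"
    have "q \<noteq> []" using q by (simp add: is_walk_def)
    then have "length q = Suc (length q - 1)" by simp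
    then have "?P (length q - 1)" using q by blast
    then have "graph_dist V E x y \<le> length q - 1" unfolding graph_dist_def by (rule Least_le)
    moreover have "q \<noteq> []" using q by (simp add: is_walk_def)
    ultimately show "length p \<le> length q" using p(2) by (cases q) auto
  qed
  have "distinct p"
  proof (rule ccontr)
    assume "\<not> distinct p"
    then obtain i j where ij: "i < length p" "j < length p" "i \<noteq> j" "p ! i = p ! j"
      by (auto simp: distinct_conv_nth)
    then obtain a b where ab: "a < b" "b < length p" "p ! a = p ! b"
      by (metis linorder_neqE_nat)
    have "is_walk V E (take a p @ drop b p) x y" by (rule walk_shortcut[OF p(1) ab])
    from min[OF this] ab show False by simp
  qed
  then show ?thesis using p by blast
qed

theorem lemma2p2:
  fixes V :: "'a set" and E :: "'a \<Rightarrow> 'a \<Rightarrow> bool" and f :: "'a \<Rightarrow> real" and u v :: 'a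
  assumes "simple_graph V E"
    and "graph_connected V E"
    and "card V \<ge> 2"
    and "harmonic_eigenfunction V E f"
    and "u \<in> V" and "v \<in> V"
    and "\<forall>z\<in>V. f u \<le> f z \<and> f z \<le> f v"
  shows "lambda1 V E \<ge> 2 / (real (graph_dist V E u v) * sqrt (vol_P V E f * vol_N V E f))"
proof -
  have fin: "finite V" and sym: "\<And>a b. E a b \<Longrightarrow> E b a"
    and inV: "\<And>a b. E a b \<Longrightarrow> a \<in> V \<and> b \<in> V"
    using assms(1) unfolding simple_graph_def by auto
  define d where "d z = real (degree V E z)" for z
  have dpos: "d z > 0" if z: "z \<in> V" for z
  proof -
    have "V \<noteq> {z}" using assms(3) by auto
    then obtain y where y: "y \<in> V" "y \<noteq> z" using z by blast
    obtain p where p: "is_walk V E p z y" using assms(2) z y unfolding graph_connected_def by blast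
    have l: "Suc 0 < length p"
    proof (rule ccontr)
      assume "\<not> Suc 0 < length p"
      moreover have "p \<noteq> []" using p by (simp add: is_walk_def)
      ultimately obtain a where "p = [a]" by (cases p) auto
      then show False using p y(2) by (auto simp: is_walk_def)
    qed
    have "E (p ! 0) (p ! Suc 0)" using p l by (simp add: is_walk_def)
    moreover have "p ! 0 = z" using p unfolding is_walk_def by (metis hd_conv_nth)
    ultimately have "p ! Suc 0 \<in> {w \<in> V. E z w}" using inV by auto
    then have "{w \<in> V. E z w} \<noteq> {}" by blast
    moreover have "finite {w \<in> V. E z w}" using fin by simp
    ultimately show "d z > 0" by (simp add: d_def degree_def card_gt_0_iff)
  qed
  have lam: "lambda1 V E = rayleigh V E f" and sumz: "(\<Sum>z\<in>V. f z * d z) = 0"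
    and nz: "\<exists>z\<in>V. f z \<noteq> 0"
    using assms(4) unfolding harmonic_eigenfunction_def admissible_def d_def by auto
  define M where "M = f v"
  define m where "m = f u"
  have bnd: "\<And>z. z \<in> V \<Longrightarrow> m \<le> f z \<and> f z \<le> M" using assms(7) M_def m_def by auto
  have Vne: "V \<noteq> {}" using assms(5) by auto
  have m0: "m \<le> 0"
  proof (rule ccontr)
    assume "\<not> m \<le> 0"
    then have fp: "\<forall>z\<in>V. 0 < f z" using bnd by force
    then have "0 < (\<Sum>z\<in>V. f z * d z)" using fin Vne fp dpos
      by (intro sum_pos) (auto intro!: mult_pos_pos)
    then show False using sumz by simp
  qed
  have M0: "0 \<le> M"
  proof (rule ccontr)
    assume "\<not> 0 \<le> M"
    then have fp: "\<forall>z\<in>V. 0 < - f z" using bnd by force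
    then have "0 < (\<Sum>z\<in>V. - f z * d z)" using fin Vne fp dpos
      by (intro sum_pos) (auto intro!: mult_pos_pos simp del: neg_less_0_iff_less mult_minus_left, meson mult_neg_pos)
    then show False using sumz by (simp add: sum_negf)
  qed
  have mM: "m < M"
  proof (rule ccontr)
    assume "\<not> m < M"
    then have "\<forall>z\<in>V. f z = 0" using bnd m0 M0 by force
    then show False using nz by auto
  qed
  define D where "D = graph_dist V E u v"
  obtain p where p: "is_walk V E p u v" "length p = Suc D" "distinct p"
    using shortest_walk[OF assms(2,5,6)] D_def by blast
  have Dpos: "D > 0"
  proof (rule ccontr)
    assume "\<not> D > 0"
    then have "D = 0" by simp
    then obtain a where "p = [a]" using p(2) by (cases p) auto
    then have "u = v" using p(1) by (auto simp: is_walk_def)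
    then show False using mM M_def m_def by simp
  qed
  have edge: "\<And>i. i < D \<Longrightarrow> E (p ! i) (p ! Suc i)" using p by (simp add: is_walk_def)
  have p0: "p ! 0 = u" using p unfolding is_walk_def by (metis hd_conv_nth)
  have pD: "p ! D = v" using p unfolding is_walk_def by (metis last_conv_nth diff_Suc_1)
  have inj: "i = j" if "i \<le> D" "j \<le> D" "p ! i = p ! j" for i j
    using nth_eq_iff_index_eq[OF p(3), of i j] p(2) that by simp
  define g where "g a b = (f a - f b)\<^sup>2" for a b
  define num2 where "num2 = (\<Sum>a\<in>V. \<Sum>b\<in>{w \<in> V. E a w}. (f a - f b)\<^sup>2)"
  define Sg where "Sg = Sigma V (\<lambda>a. {w \<in> V. E a w})"
  have num2S: "num2 = (\<Sum>(a,b)\<in>Sg. g a b)"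
    unfolding num2_def Sg_def g_def using fin by (subst sum.Sigma) auto
  define A1 where "A1 = (\<lambda>i. (p ! i, p ! Suc i)) ` {..<D}"
  define A2 where "A2 = (\<lambda>i. (p ! Suc i, p ! i)) ` {..<D}"
  have finS: "finite Sg" unfolding Sg_def using fin by auto
  have sub: "A1 \<union> A2 \<subseteq> Sg" unfolding A1_def A2_def Sg_def using edge inV sym by blast
  have disj: "A1 \<inter> A2 = {}"
  proof -
    { fix i j assume ij: "i < D" "j < D" "p ! i = p ! Suc j" "p ! Suc i = p ! j"
      then have "i = Suc j" "Suc i = j" using inj[of i "Suc j"] inj[of "Suc i" j] by auto
      then have False by simp }
    then show ?thesis unfolding A1_def A2_def by auto
  qed
  have inj1: "inj_on (\<lambda>i. (p ! i, p ! Suc i)) {..<D}" using inj by (auto simp: inj_on_def)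
  have inj2: "inj_on (\<lambda>i. (p ! Suc i, p ! i)) {..<D}" using inj by (auto simp: inj_on_def)
  define a where "a i = f (p ! Suc i) - f (p ! i)" for i
  have sA1: "(\<Sum>(x,y)\<in>A1. g x y) = (\<Sum>i<D. (a i)\<^sup>2)"
    unfolding A1_def using inj1 by (simp add: sum.reindex g_def a_def power2_commute)
  have sA2: "(\<Sum>(x,y)\<in>A2. g x y) = (\<Sum>i<D. (a i)\<^sup>2)"
    unfolding A2_def using inj2 by (simp add: sum.reindex g_def a_def)
  have "(\<Sum>(x,y)\<in>A1 \<union> A2. g x y) \<le> (\<Sum>(x,y)\<in>Sg. g x y)"
    using finS sub by (intro sum_mono2) (auto simp: g_def)
  moreover have "(\<Sum>(x,y)\<in>A1 \<union> A2. g x y) = (\<Sum>(x,y)\<in>A1. g x y) + (\<Sum>(x,y)\<in>A2. g x y)"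
    using disj finS sub by (intro sum.union_disjoint) (auto intro: finite_subset)
  ultimately have numlow: "2 * (\<Sum>i<D. (a i)\<^sup>2) \<le> num2" using sA1 sA2 num2S by simp
  have tel: "(\<Sum>i<D. a i) = M - m"
    unfolding a_def using sum_lessThan_telescope[of "\<lambda>i. f (p ! i)" D] p0 pD M_def m_def by simp
  have "(M - m)\<^sup>2 \<le> real D * (\<Sum>i<D. (a i)\<^sup>2)" using cs_sum[of a D] tel by simp
  moreover have "real D * (2 * (\<Sum>i<D. (a i)\<^sup>2)) \<le> real D * num2"
    by (rule mult_left_mono[OF numlow]) simp
  ultimately have numlow2: "2 * (M - m)\<^sup>2 \<le> real D * num2" by simp
  define P where "P = {z \<in> V. f z \<ge> 0}"
  define N where "N = {z \<in> V. f z < 0}"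
  have split: "(\<Sum>z\<in>V. F z) = (\<Sum>z\<in>P. F z) + (\<Sum>z\<in>N. F z)" for F :: "'a \<Rightarrow> real"
  proof -
    have "V = P \<union> N" "P \<inter> N = {}" unfolding P_def N_def by auto
    moreover have "finite P" "finite N" unfolding P_def N_def using fin by auto
    ultimately show ?thesis by (metis sum.union_disjoint)
  qed
  define S where "S = (\<Sum>z\<in>P. f z * d z)"
  have SN: "(\<Sum>z\<in>N. f z * d z) = - S" using split[of "\<lambda>z. f z * d z"] sumz S_def by simp
  define den where "den = (\<Sum>z\<in>V. (f z)\<^sup>2 * d z)"
  have dP: "(\<Sum>z\<in>P. (f z)\<^sup>2 * d z) \<le> (\<Sum>z\<in>P. M * (f z * d z))"
  proof (intro sum_mono)
    fix z assume z: "z \<in> P"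
    then have "0 \<le> f z" "f z \<le> M" "0 < d z" using bnd dpos unfolding P_def by auto
    then have "(f z)\<^sup>2 \<le> M * f z" by (simp add: power2_eq_square mult_right_mono)
    then show "(f z)\<^sup>2 * d z \<le> M * (f z * d z)" using \<open>0 < d z\<close>
      by (metis mult.assoc mult_right_mono less_imp_le)
  qed
  have dN: "(\<Sum>z\<in>N. (f z)\<^sup>2 * d z) \<le> (\<Sum>z\<in>N. m * (f z * d z))"
  proof (intro sum_mono)
    fix z assume z: "z \<in> N"
    then have "f z < 0" "m \<le> f z" "0 < d z" using bnd dpos unfolding N_def by auto
    then have "(f z)\<^sup>2 \<le> m * f z" by (simp add: power2_eq_square mult_right_mono_neg)
    then show "(f z)\<^sup>2 * d z \<le> m * (f z * d z)" using \<open>0 < d z\<close>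
      by (metis mult.assoc mult_right_mono less_imp_le)
  qed
  have denle: "den \<le> (M - m) * S"
    using split[of "\<lambda>z. (f z)\<^sup>2 * d z"] dP dN SN
    by (simp add: den_def sum_distrib_left[symmetric] S_def algebra_simps)
  have S0: "0 \<le> S" unfolding S_def P_def using dpos by (intro sum_nonneg mult_nonneg_nonneg) (auto intro: less_imp_le)
  have vP: "vol_P V E f = (\<Sum>z\<in>P. d z)" unfolding vol_P_def P_def d_def by simp
  have vN: "vol_N V E f = (\<Sum>z\<in>N. d z)" unfolding vol_N_def N_def d_def by simp
  have SP: "S \<le> M * vol_P V E f" unfolding vP S_def sum_distrib_left
    using bnd dpos unfolding P_def by (intro sum_mono) (auto intro!: mult_right_mono)
  have "(\<Sum>z\<in>N. m * d z) \<le> (\<Sum>z\<in>N. f z * d z)"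
    using bnd dpos unfolding N_def by (intro sum_mono) (auto intro!: mult_right_mono)
  then have SNb: "S \<le> (- m) * vol_N V E f" using SN unfolding vN sum_distrib_left by (simp add: sum_negf)
  have vP0: "0 \<le> vol_P V E f" unfolding vP using dpos P_def by (intro sum_nonneg) (auto intro: less_imp_le)
  have vN0: "0 \<le> vol_N V E f" unfolding vN using dpos N_def by (intro sum_nonneg) (auto intro: less_imp_le)
  define X where "X = vol_P V E f * vol_N V E f"
  have X0: "0 \<le> X" using vP0 vN0 X_def by simp
  have "S\<^sup>2 \<le> (M * vol_P V E f) * ((- m) * vol_N V E f)"
    unfolding power2_eq_square using SP SNb S0 by (intro mult_mono) auto
  also have "\<dots> = (M * (-m)) * X" unfolding X_def by (simp add: algebra_simps)
  also have "\<dots> \<le> ((M - m) / 2)\<^sup>2 * X"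
  proof (intro mult_right_mono X0)
    have "0 \<le> (M + m)\<^sup>2" by simp
    then show "M * (-m) \<le> ((M - m) / 2)\<^sup>2" by (simp add: power2_eq_square field_simps)
  qed
  finally have "S \<le> sqrt (((M - m) / 2)\<^sup>2 * X)" by (rule real_le_rsqrt)
  also have "\<dots> = (M - m) / 2 * sqrt X" using mM by (simp add: real_sqrt_mult)
  finally have Sle: "S \<le> (M - m) / 2 * sqrt X" .
  have den_up: "den \<le> (M - m)\<^sup>2 / 2 * sqrt X"
  proof -
    have "den \<le> (M - m) * S" by (rule denle)
    also have "\<dots> \<le> (M - m) * ((M - m) / 2 * sqrt X)" using Sle mM by (intro mult_left_mono) auto
    finally show ?thesis by (simp add: power2_eq_square)
  qed
  have den_pos: "0 < den"
  proof -
    obtain z where z: "z \<in> V" "f z \<noteq> 0" using nz by blast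
    have a1: "0 < (f z)\<^sup>2 * d z" using z dpos by simp
    have a2: "\<And>i. i \<in> V \<Longrightarrow> 0 \<le> (f i)\<^sup>2 * d i" using dpos by (simp add: less_imp_le)
    show ?thesis unfolding den_def by (rule sum_pos2[of V z "\<lambda>i. (f i)\<^sup>2 * d i", OF fin z(1) a1 a2])
  qed
  have sqpos: "0 < sqrt X"
  proof (rule ccontr)
    assume "\<not> 0 < sqrt X"
    then have "sqrt X = 0" using X0 by simp
    then show False using den_up den_pos by simp
  qed
  have ray: "rayleigh V E f = (num2 / 2) / den" unfolding rayleigh_def num2_def den_def d_def by simp
  have Dr: "0 < real D" using Dpos by simp
  have key: "2 * den \<le> (num2 / 2) * real D * sqrt X"
  proof -
    have "2 * den \<le> (M - m)\<^sup>2 * sqrt X" using den_up by simp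
    also have "\<dots> \<le> (num2 / 2) * real D * sqrt X"
      using numlow2 sqpos by (intro mult_right_mono) (auto simp: mult.commute)
    finally show ?thesis .
  qed
  have "2 / (real D * sqrt X) \<le> (num2 / 2) / den"
    using key den_pos Dr sqpos by (simp add: divide_simps mult.commute mult.left_commute)
  then show ?thesis using lam ray D_def X_def by simp
qed

end
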